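(* Let $C$ be a completely transitive code in $H(m,2)$ with $\mathbf 0\in C$ and minimum distance $\delta\in\{5,6\}$. Then the set of all codewords of weight $\delta$ forms the block set of a $t$-$(m,\delta,\lambda)$ design, where either 1. $\delta=5$, $t=2$ and $\lambda\le (m-2)/3$; or 2. $\delta=6$, $t=3$ and $\lambda\le (m-3)/3$.
   Context: $H(m,2)$: vertex set $\mathbb F_2^m$ with coordinates indexed by a set $M$ of size $m$; vertices are identified with their supports (subsets of $M$), and the weight of a vertex is the size of its support. For a code $C$: covering radius $\rho=\max_\alpha d(\alpha,C)$, $C_i=\{\alpha:d(\alpha,C)=i\}$. $\mathrm{Aut}(C)$ is the setwise stabiliser of $C$ in the automorphism group of $H(m,2)$ (translations together with coordinate permutations); $C$ is completely transitive if $\mathrm{Aut}(C)$ is transitive on each of $C,C_1,\dots,C_\rho$. A $t$-$(m,k,\lambda)$ design is a collection of $k$-subsets (blocks) of an $m$-set such that every $t$-subset lies in exactly $\lambda$ blocks. *)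

theory Defs
  imports Complex_Main "HOL-Combinatorics.Permutations"
begin

text \<open>The Hamming graph H(m,2) with coordinate set M (card M = m): vertices are
  subsets of M (supports), weight = card, distance = size of symmetric difference.\<close>

definition hdist :: "'a set \<Rightarrow> 'a set \<Rightarrow> nat" where
  "hdist x y = card ((x - y) \<union> (y - x))"

definition symdiff :: "'a set \<Rightarrow> 'a set \<Rightarrow> 'a set" where
  "symdiff x y = (x - y) \<union> (y - x)"

definition hamming_aut :: "'a set \<Rightarrow> ('a set \<Rightarrow> 'a set) set" where
  "hamming_aut M = {f. \<exists>a \<sigma>. a \<subseteq> M \<and> \<sigma> permutes M \<and> f = (\<lambda>x. symdiff (\<sigma> ` x) a)}"

definition code_aut :: "'a set \<Rightarrow> 'a set set \<Rightarrow> ('a set \<Rightarrow> 'a set) set" where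
  "code_aut M C = {g \<in> hamming_aut M. g ` C = C}"

definition dist_to_code :: "'a set set \<Rightarrow> 'a set \<Rightarrow> nat" where
  "dist_to_code C x = Min (hdist x ` C)"

definition covering_radius :: "'a set \<Rightarrow> 'a set set \<Rightarrow> nat" where
  "covering_radius M C = Max (dist_to_code C ` Pow M)"

definition code_layer :: "'a set \<Rightarrow> 'a set set \<Rightarrow> nat \<Rightarrow> 'a set set" where
  "code_layer M C i = {x \<in> Pow M. dist_to_code C x = i}"

definition completely_transitive :: "'a set \<Rightarrow> 'a set set \<Rightarrow> bool" where
  "completely_transitive M C \<longleftrightarrow>
     (\<forall>i \<le> covering_radius M C. \<forall>x \<in> code_layer M C i. \<forall>y \<in> code_layer M C i.
        \<exists>g \<in> code_aut M C. g x = y)"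

definition has_min_distance :: "'a set set \<Rightarrow> nat \<Rightarrow> bool" where
  "has_min_distance C d \<longleftrightarrow>
     (\<exists>x\<in>C. \<exists>y\<in>C. x \<noteq> y \<and> hdist x y = d) \<and>
     (\<forall>x\<in>C. \<forall>y\<in>C. x \<noteq> y \<longrightarrow> d \<le> hdist x y)"

definition is_design :: "'a set \<Rightarrow> nat \<Rightarrow> nat \<Rightarrow> nat \<Rightarrow> 'a set set \<Rightarrow> bool" where
  "is_design M t k lam B \<longleftrightarrow>
     (\<forall>b\<in>B. b \<subseteq> M \<and> card b = k) \<and>
     (\<forall>T. T \<subseteq> M \<and> card T = t \<longrightarrow> card {b \<in> B. T \<subseteq> b} = lam)"

end

theory Submission
  imports Defs
begin

lemma fin_mem: "C \<subseteq> Pow M \<Longrightarrow> finite M \<Longrightarrow> c \<in> C \<Longrightarrow> finite c"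
  by (meson PowD finite_subset subsetD)

lemma fin_T: "finite M \<Longrightarrow> T \<subseteq> M \<Longrightarrow> finite T"
  by (rule finite_subset)

lemma fin_C: "C \<subseteq> Pow M \<Longrightarrow> finite M \<Longrightarrow> finite C"
  by (meson finite_Pow_iff finite_subset)

lemma hdist_aut:
  assumes "g \<in> hamming_aut M"
  shows "hdist (g x) (g y) = hdist x y"
proof -
  obtain a \<sigma> where s: "\<sigma> permutes M" and g: "g = (\<lambda>x. symdiff (\<sigma> ` x) a)"
    using assms unfolding hamming_aut_def by blast
  have inj: "inj \<sigma>" using s by (rule permutes_inj)
  have "(g x - g y) \<union> (g y - g x) = (\<sigma> ` x - \<sigma> ` y) \<union> (\<sigma> ` y - \<sigma> ` x)"
    unfolding g symdiff_def by blast
  also have "\<dots> = \<sigma> ` ((x - y) \<union> (y - x))"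
    using inj by (simp add: image_set_diff image_Un)
  finally show ?thesis unfolding hdist_def
    by (metis card_image inj inj_on_subset subset_UNIV)
qed

lemma inj_aut:
  assumes "g \<in> hamming_aut M"
  shows "inj g"
proof -
  obtain a \<sigma> where s: "\<sigma> permutes M" and g: "g = (\<lambda>x. symdiff (\<sigma> ` x) a)"
    using assms unfolding hamming_aut_def by blast
  have inj: "inj \<sigma>" using s by (rule permutes_inj)
  show ?thesis
  proof (rule injI)
    fix x y assume "g x = g y"
    then have "symdiff (symdiff (\<sigma> ` x) a) a = symdiff (symdiff (\<sigma> ` y) a) a"
      unfolding g by simp
    then have "\<sigma> ` x = \<sigma> ` y" unfolding symdiff_def by blast
    then show "x = y" using inj by (simp add: inj_image_eq_iff)
  qed
qed

lemma count_inv: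
  assumes "g \<in> hamming_aut M" "g ` C = C"
  shows "card {c\<in>C. hdist (g x) c = d} = card {c\<in>C. hdist x c = d}"
proof -
  have "{c\<in>C. hdist (g x) c = d} = g ` {c\<in>C. hdist x c = d}"
  proof
    show "g ` {c\<in>C. hdist x c = d} \<subseteq> {c\<in>C. hdist (g x) c = d}"
      using assms hdist_aut[OF assms(1)] by auto
  next
    show "{c\<in>C. hdist (g x) c = d} \<subseteq> g ` {c\<in>C. hdist x c = d}"
    proof
      fix c assume c: "c \<in> {c\<in>C. hdist (g x) c = d}"
      then obtain c' where "c' \<in> C" "c = g c'" using assms(2) by blast
      then show "c \<in> g ` {c\<in>C. hdist x c = d}"
        using c hdist_aut[OF assms(1)] by auto
    qed
  qed
  then show ?thesis
    using inj_aut[OF assms(1)] by (simp add: card_image inj_on_subset)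
qed

lemma hdist_card:
  assumes "finite x" "finite y"
  shows "hdist x y = card (x - y) + card (y - x)"
  unfolding hdist_def using assms by (simp add: card_Un_disjoint disjoint_iff)

lemma card_diff_ge:
  assumes "finite c" "finite T"
  shows "card c - card T \<le> card (c - T)"
proof -
  have "card (c - T) = card c - card (c \<inter> T)" using assms by (simp add: card_Diff_subset_Int)
  moreover have "card (c \<inter> T) \<le> card T" using assms by (simp add: card_mono)
  ultimately show ?thesis by simp
qed

lemma hdist_lower:
  assumes "finite c" "finite T"
  shows "card c - card T \<le> hdist T c"
  using card_diff_ge[OF assms] hdist_card[OF assms(2,1)] by simp

lemma cge_lemma:
  assumes md: "\<forall>x\<in>C. \<forall>y\<in>C. x \<noteq> y \<longrightarrow> \<delta> \<le> hdist x y"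
    and "{} \<in> C" "c \<in> C" "c \<noteq> {}" "finite c"
  shows "\<delta> \<le> card c"
proof -
  have "\<delta> \<le> hdist {} c" using md assms(2-4) by blast
  moreover have "hdist {} c = card c" using hdist_card[of "{}" c] assms(5) by simp
  ultimately show ?thesis by simp
qed

lemma key_set:
  assumes "C \<subseteq> Pow M" "finite M" "{} \<in> C"
    and md: "\<forall>x\<in>C. \<forall>y\<in>C. x \<noteq> y \<longrightarrow> \<delta> \<le> hdist x y"
    and "2 * t \<le> \<delta>" "1 \<le> t" "T \<subseteq> M" "card T = t"
  shows "{c\<in>C. hdist T c = \<delta> - t} =
     {b \<in> {c\<in>C. card c = \<delta>}. T \<subseteq> b} \<union> (if \<delta> = 2*t then {{}} else {})"
proof -
  have fT: "finite T" using assms(7) by (rule finite_subset) (rule assms(2))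
  have fc: "finite c" if "c \<in> C" for c using fin_mem[OF assms(1,2) that] .
  have h0: "hdist T {} = t" using hdist_card[of T "{}"] fT assms(8) by simp
  have dir1: "c \<in> {b \<in> {c\<in>C. card c = \<delta>}. T \<subseteq> b} \<union> (if \<delta> = 2*t then {{}} else {})"
    if cC: "c \<in> C" and hc: "hdist T c = \<delta> - t" for c
  proof (cases "c = {}")
    case True
    then have "\<delta> - t = t" using hc h0 by simp
    then have "\<delta> = 2 * t" using assms(5) by linarith
    then show ?thesis using True by simp
  next
    case False
    have fcc: "finite c" using fc cC .
    have h: "card (T - c) + card (c - T) = \<delta> - t" using hdist_card[OF fT fcc] hc by simp
    have a1: "card c - t \<le> card (c - T)" using card_diff_ge[OF fcc fT] assms(8) by simp
    have a2: "\<delta> \<le> card c" using cge_lemma[OF md assms(3) cC False fcc] .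
    have "card (T - c) = 0" using h a1 a2 assms(5) by linarith
    then have "T \<subseteq> c" using fT by simp
    have "card c = \<delta>" using h a1 a2 assms(5) by linarith
    then show ?thesis using cC \<open>T \<subseteq> c\<close> by simp
  qed
  have dir2: "c \<in> C \<and> hdist T c = \<delta> - t"
    if c: "c \<in> {b \<in> {c\<in>C. card c = \<delta>}. T \<subseteq> b} \<union> (if \<delta> = 2*t then {{}} else {})" for c
  proof (cases "c \<in> {b \<in> {c\<in>C. card c = \<delta>}. T \<subseteq> b}")
    case True
    then have cC: "c \<in> C" and cd: "card c = \<delta>" and Tc: "T \<subseteq> c" by auto
    have "T - c = {}" using Tc by blast
    then have "card (T - c) = 0" by (simp only: card.empty)
    then have "hdist T c = card (c - T)" using hdist_card[OF fT fc[OF cC]] by linarith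
    also have "\<dots> = \<delta> - t" using card_Diff_subset[OF fT Tc] cd assms(8) by simp
    finally show ?thesis using cC by simp
  next
    case False
    then have "\<delta> = 2 * t" "c = {}" using c by (auto split: if_splits)
    then show ?thesis using h0 assms(3) by simp
  qed
  show ?thesis
  proof
    show "{c\<in>C. hdist T c = \<delta> - t} \<subseteq> {b \<in> {c\<in>C. card c = \<delta>}. T \<subseteq> b} \<union> (if \<delta> = 2*t then {{}} else {})"
      using dir1 by blast
    show "{b \<in> {c\<in>C. card c = \<delta>}. T \<subseteq> b} \<union> (if \<delta> = 2*t then {{}} else {}) \<subseteq> {c\<in>C. hdist T c = \<delta> - t}"
      using dir2 by blast
  qed
qed

lemma key_count:
  assumes "C \<subseteq> Pow M" "finite M" "{} \<in> C"
    and md: "\<forall>x\<in>C. \<forall>y\<in>C. x \<noteq> y \<longrightarrow> \<delta> \<le> hdist x y"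
    and "2 * t \<le> \<delta>" "1 \<le> t" "T \<subseteq> M" "card T = t"
  shows "card {b \<in> {c\<in>C. card c = \<delta>}. T \<subseteq> b} + (if \<delta> = 2*t then 1 else 0)
         = card {c\<in>C. hdist T c = \<delta> - t}"
proof -
  have fC: "finite C" using fin_C[OF assms(1,2)] .
  define A where "A = {b \<in> {c\<in>C. card c = \<delta>}. T \<subseteq> b}"
  have fA: "finite A" using fC unfolding A_def by simp
  have nA: "{} \<notin> A" using assms(5,6) unfolding A_def by auto
  have E: "{c\<in>C. hdist T c = \<delta> - t} = A \<union> (if \<delta> = 2*t then {{}} else {})"
    unfolding A_def by (rule key_set[OF assms])
  show ?thesis
  proof (cases "\<delta> = 2 * t")
    case True
    then have "{c\<in>C. hdist T c = \<delta> - t} = insert {} A" using E by simp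
    then have eq: "card {c\<in>C. hdist T c = \<delta> - t} = card A + 1" using fA nA by simp
    have i: "(if \<delta> = 2*t then 1 else 0::nat) = 1" using True by simp
    show ?thesis unfolding i using eq[unfolded A_def] by (rule sym)
  next
    case False
    then have "{c\<in>C. hdist T c = \<delta> - t} = A" using E by simp
    then show ?thesis using False unfolding A_def by simp
  qed
qed

lemma dist_T:
  assumes "C \<subseteq> Pow M" "finite M" "{} \<in> C"
    and md: "\<forall>x\<in>C. \<forall>y\<in>C. x \<noteq> y \<longrightarrow> \<delta> \<le> hdist x y"
    and "2 * t \<le> \<delta>" "T \<subseteq> M" "card T = t"
  shows "dist_to_code C T = t"
proof -
  have fC: "finite C" using fin_C[OF assms(1,2)] .
  have fT: "finite T" using fin_T[OF assms(2)] assms by blast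
  have fc: "finite c" if "c \<in> C" for c using fin_mem[OF assms(1,2) that] .
  have cge: "\<delta> \<le> card c" if "c \<in> C" "c \<noteq> {}" for c
    using cge_lemma[OF md assms(3) that fc[OF that(1)]] .
  have h0: "hdist T {} = t" using hdist_card[of T "{}"] fT assms by simp
  have "t \<le> hdist T c" if "c \<in> C" for c
  proof (cases "c = {}")
    case True then show ?thesis using h0 by simp
  next
    case False
    then show ?thesis using hdist_lower[of c T] fc[OF that] fT cge[OF that] assms by linarith
  qed
  moreover have "t \<in> hdist T ` C" using assms(3) h0 by (metis image_eqI)
  moreover have "finite (hdist T ` C)" using fC by simp
  ultimately show ?thesis unfolding dist_to_code_def
    by (intro Min_eqI) auto
qed

lemma lam_const:
  assumes "C \<subseteq> Pow M" "finite M" "{} \<in> C" "completely_transitive M C"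
    and md: "\<forall>x\<in>C. \<forall>y\<in>C. x \<noteq> y \<longrightarrow> \<delta> \<le> hdist x y"
    and "2 * t \<le> \<delta>" "1 \<le> t" "T \<subseteq> M" "card T = t" "T' \<subseteq> M" "card T' = t"
  shows "card {b \<in> {c\<in>C. card c = \<delta>}. T' \<subseteq> b} = card {b \<in> {c\<in>C. card c = \<delta>}. T \<subseteq> b}"
proof -
  have d1: "dist_to_code C T = t" using dist_T[OF assms(1-3) md assms(6,8,9)] .
  have d2: "dist_to_code C T' = t" using dist_T[OF assms(1-3) md assms(6,10,11)] .
  have L1: "T \<in> code_layer M C t" using d1 assms(8) unfolding code_layer_def by simp
  have L2: "T' \<in> code_layer M C t" using d2 assms(10) unfolding code_layer_def by simp
  have "t \<in> dist_to_code C ` Pow M" using d1 assms(8) by (metis Pow_iff image_eqI)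
  moreover have "finite (dist_to_code C ` Pow M)" using assms(2) by simp
  ultimately have "t \<le> covering_radius M C" unfolding covering_radius_def
    by (rule Max_ge[rotated])
  then have "\<exists>g \<in> code_aut M C. g T = T'"
    using assms(4) L1 L2 unfolding completely_transitive_def by blast
  then obtain g where g: "g \<in> code_aut M C" "g T = T'" by blast
  have g1: "g \<in> hamming_aut M" "g ` C = C" using g(1) unfolding code_aut_def by auto
  have "card {c\<in>C. hdist T' c = \<delta> - t} = card {c\<in>C. hdist T c = \<delta> - t}"
    using count_inv[OF g1, of T] g(2) by simp
  moreover note key_count[OF assms(1-3) md assms(6,7,8,9)]
  moreover note key_count[OF assms(1-3) md assms(6,7,10,11)]
  ultimately show ?thesis by linarith
qed

lemma lam_bound:
  assumes "C \<subseteq> Pow M" "finite M"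
    and md: "\<forall>x\<in>C. \<forall>y\<in>C. x \<noteq> y \<longrightarrow> \<delta> \<le> hdist x y"
    and "\<delta> \<le> 2 * t + 1" "T \<subseteq> M" "card T = t"
  shows "(\<delta> - t) * card {b \<in> {c\<in>C. card c = \<delta>}. T \<subseteq> b} \<le> card M - t"
proof -
  define S where "S = {b \<in> {c\<in>C. card c = \<delta>}. T \<subseteq> b}"
  have fC: "finite C" using fin_C[OF assms(1,2)] .
  have fS: "finite S" using fC unfolding S_def by auto
  have fT: "finite T" using fin_T[OF assms(2)] assms by blast
  have fc: "finite c" if "c \<in> C" for c using fin_mem[OF assms(1,2) that] .
  have inter: "b \<inter> b' = T" if "b \<in> S" "b' \<in> S" "b \<noteq> b'" for b b'
  proof -
    have fb: "finite b" "finite b'" using that fc unfolding S_def by auto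
    have "\<delta> \<le> hdist b b'" using md that unfolding S_def by auto
    also have "hdist b b' = card (b - b') + card (b' - b)" using hdist_card fb by auto
    also have "card (b - b') = \<delta> - card (b \<inter> b')" using that fb unfolding S_def
      by (simp add: card_Diff_subset_Int)
    also have "card (b' - b) = \<delta> - card (b \<inter> b')" using that fb unfolding S_def
      by (simp add: card_Diff_subset_Int Int_commute)
    finally have le: "\<delta> \<le> \<delta> - card (b \<inter> b') + (\<delta> - card (b \<inter> b'))" .
    have "card (b \<inter> b') \<le> card b" using fb by (simp add: card_mono)
    then have "card (b \<inter> b') \<le> \<delta>" using that unfolding S_def by simp
    then have "card (b \<inter> b') \<le> t" using le assms(4) by linarith
    moreover have "T \<subseteq> b \<inter> b'" using that unfolding S_def by auto
    ultimately show ?thesis using fb assms(6) by (metis card_seteq finite_Int)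
  qed
  have "(\<Sum>b\<in>S. card (b - T)) = card (\<Union>b\<in>S. b - T)"
    using fS fc inter unfolding S_def by (subst card_UN_disjoint) auto
  also have "\<dots> \<le> card (M - T)"
    using assms fS unfolding S_def by (intro card_mono) auto
  also have "\<dots> = card M - t" using assms fT by (simp add: card_Diff_subset)
  finally have "(\<Sum>b\<in>S. card (b - T)) \<le> card M - t" .
  moreover have "(\<Sum>b\<in>S. card (b - T)) = (\<delta> - t) * card S"
    using fT assms unfolding S_def by (simp add: card_Diff_subset)
  ultimately show ?thesis unfolding S_def by simp
qed

lemma design_part:
  assumes "C \<subseteq> Pow M" "finite M" "{} \<in> C" "completely_transitive M C"
    and md: "\<forall>x\<in>C. \<forall>y\<in>C. x \<noteq> y \<longrightarrow> \<delta> \<le> hdist x y"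
    and "2 * t \<le> \<delta>" "\<delta> \<le> 2 * t + 1" "1 \<le> t" "t \<le> card M"
  shows "\<exists>lam. is_design M t \<delta> lam {c \<in> C. card c = \<delta>} \<and>
           (\<delta> - t) * lam \<le> card M - t"
proof -
  obtain T0 where T0: "T0 \<subseteq> M" "card T0 = t" using obtain_subset_with_card_n assms(9) by metis
  define lam where "lam = card {b \<in> {c\<in>C. card c = \<delta>}. T0 \<subseteq> b}"
  have "is_design M t \<delta> lam {c \<in> C. card c = \<delta>}"
    unfolding is_design_def lam_def
    using assms(1) lam_const[OF assms(1-5) assms(6,8) T0] by auto
  moreover have "(\<delta> - t) * lam \<le> card M - t"
    unfolding lam_def using lam_bound[OF assms(1,2) md assms(7) T0] .
  ultimately show ?thesis by blast
qed

theorem lemma2p11: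
  fixes M :: "'a set" and C :: "'a set set" and \<delta> :: nat
  assumes "finite M"
    and "C \<subseteq> Pow M"
    and "completely_transitive M C"
    and "{} \<in> C"
    and "has_min_distance C \<delta>"
    and "\<delta> \<in> {5, 6}"
  shows "\<exists>lam :: nat.
           (\<delta> = 5 \<and> is_design M 2 \<delta> lam {c \<in> C. card c = \<delta>}
              \<and> real lam \<le> (real (card M) - 2) / 3) \<or>
           (\<delta> = 6 \<and> is_design M 3 \<delta> lam {c \<in> C. card c = \<delta>}
              \<and> real lam \<le> (real (card M) - 3) / 3)"
proof -
  have md: "\<forall>x\<in>C. \<forall>y\<in>C. x \<noteq> y \<longrightarrow> \<delta> \<le> hdist x y"
    using assms(5) unfolding has_min_distance_def by blast
  obtain x y where xy: "x \<in> C" "y \<in> C" "hdist x y = \<delta>"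
    using assms(5) unfolding has_min_distance_def by blast
  have "hdist x y \<le> card M" unfolding hdist_def
    using xy assms(1,2) by (intro card_mono) auto
  then have dM: "\<delta> \<le> card M" using xy by simp
  show ?thesis
  proof (cases "\<delta> = 5")
    case True
    obtain lam where "is_design M 2 \<delta> lam {c \<in> C. card c = \<delta>}" "(\<delta> - 2) * lam \<le> card M - 2"
      using design_part[OF assms(2,1,4,3) md, of 2] True dM by auto
    then show ?thesis using True dM by (intro exI[of _ lam]) auto
  next
    case False
    then have T: "\<delta> = 6" using assms(6) by auto
    obtain lam where "is_design M 3 \<delta> lam {c \<in> C. card c = \<delta>}" "(\<delta> - 3) * lam \<le> card M - 3"
      using design_part[OF assms(2,1,4,3) md, of 3] T dM by auto
    then show ?thesis using T dM by (intro exI[of _ lam]) auto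
  qed
qed

end
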